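(* Let $\mathfrak{R}$ be a complete rewriting system on $\Sigma$ and let $(w,r_1,r_2)$ be a triple, where $\ell_1$ and $\ell_2$ denote the left-hand sides of the rules $r_1$ and $r_2$ respectively. Assume that $(w,r_1,r_2)$ is not $\tilde c$-defined. Then $\ell_1=xuy$ and $\ell_2=yvx$ for some words $u,v\in\Sigma^*$ and some non-empty words $x,y\in\Sigma^*$.
   Context: $\Sigma^*$ is the free monoid on $\Sigma$; a rewriting system is a set of rules $l\to r$ with $l,r\in\Sigma^*$, complete meaning terminating and confluent; a rule $l\to r$ can be applied to a word if $l$ is a subword (factor) of it. A triple $(w,r_1,r_2)$ consists of a word $w$ and rules $r_1,r_2\in\mathfrak{R}$ such that $r_1$ can be applied to some cyclic conjugate of $w$ and $r_2$ can be applied to some (possibly different) cyclic conjugate of $w$ (cyclic conjugates taken in $\Sigma^*$: $ab$ and $ba$). The triple is $\tilde c$-defined if some single cyclic conjugate of $w$ admits application of both $r_1$ and $r_2$. *)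

theory Defs
  imports Main "HOL-Library.Sublist"
begin

type_synonym 'a rule = "'a list \<times> 'a list"

definition rstep :: "'a rule set \<Rightarrow> ('a list \<times> 'a list) set" where
  "rstep R = {(p @ l @ q, p @ r @ q) | p l r q. (l, r) \<in> R}"

definition terminating :: "'a rule set \<Rightarrow> bool" where
  "terminating R \<longleftrightarrow> wf ((rstep R)\<inverse>)"

definition confluent :: "'a rule set \<Rightarrow> bool" where
  "confluent R \<longleftrightarrow> (\<forall>a b c. (a, b) \<in> (rstep R)\<^sup>* \<and> (a, c) \<in> (rstep R)\<^sup>* \<longrightarrow>
      (\<exists>d. (b, d) \<in> (rstep R)\<^sup>* \<and> (c, d) \<in> (rstep R)\<^sup>*))"

definition complete :: "'a rule set \<Rightarrow> bool" where
  "complete R \<longleftrightarrow> terminating R \<and> confluent R"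

definition cyc_conj :: "'a list \<Rightarrow> 'a list \<Rightarrow> bool" where
  "cyc_conj c w \<longleftrightarrow> (\<exists>a b. w = a @ b \<and> c = b @ a)"

definition applicable :: "'a rule \<Rightarrow> 'a list \<Rightarrow> bool" where
  "applicable r c \<longleftrightarrow> sublist (fst r) c"

definition is_triple :: "'a rule set \<Rightarrow> 'a list \<Rightarrow> 'a rule \<Rightarrow> 'a rule \<Rightarrow> bool" where
  "is_triple R w r1 r2 \<longleftrightarrow> r1 \<in> R \<and> r2 \<in> R \<and>
     (\<exists>c. cyc_conj c w \<and> applicable r1 c) \<and> (\<exists>c. cyc_conj c w \<and> applicable r2 c)"

definition c_defined :: "'a list \<Rightarrow> 'a rule \<Rightarrow> 'a rule \<Rightarrow> bool" where
  "c_defined w r1 r2 \<longleftrightarrow> (\<exists>c. cyc_conj c w \<and> applicable r1 c \<and> applicable r2 c)"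

end

theory Submission
  imports Defs
begin

lemma cyc_rot: "cyc_conj c w \<longleftrightarrow> (\<exists>k. c = rotate k w)"
proof
  assume "cyc_conj c w"
  then obtain a b where "w = a @ b" "c = b @ a" unfolding cyc_conj_def by blast
  then show "\<exists>k. c = rotate k w" by (metis rotate_append)
next
  assume "\<exists>k. c = rotate k w"
  then obtain k where "c = rotate k w" by blast
  then show "cyc_conj c w" unfolding cyc_conj_def
    by (metis append_take_drop_id rotate_drop_take)
qed

lemma rot_sym: "c = rotate k w \<Longrightarrow> \<exists>m. w = rotate m c"
proof -
  assume c: "c = rotate k w"
  define n where "n = length w"
  show ?thesis
  proof (cases "n = 0")
    case True then show ?thesis using c n_def by simp
  next
    case False
    define m where "m = n - k mod n"
    have "(m + k) mod n = 0" using False unfolding m_def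
      by (metis add.commute le_add_diff_inverse mod_add_right_eq mod_le_divisor mod_self neq0_conv)
    then have "rotate (m + k) w = w" by (simp add: n_def rotate_id)
    then show ?thesis using c by (metis rotate_rotate)
  qed
qed

lemma prefix_conj:
  assumes "cyc_conj c w" "sublist l c"
  shows "\<exists>s. cyc_conj (l @ s) w"
proof -
  obtain p q where pq: "c = p @ l @ q" using assms(2) by (auto simp: sublist_def)
  obtain k where k: "c = rotate k w" using assms(1) cyc_rot by blast
  have "l @ q @ p = rotate (length p) c" using pq by (metis append.assoc rotate_append)
  then show ?thesis using k by (metis cyc_rot rotate_rotate)
qed

lemma key:
  assumes e1: "l2 @ t = \<beta> @ \<alpha>" and e2: "\<alpha> @ \<beta> = l1 @ s"
    and n1: "\<not> (sublist l1 (\<beta>@\<alpha>) \<and> sublist l2 (\<beta>@\<alpha>))"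
    and n2: "\<not> (sublist l1 (\<alpha>@\<beta>) \<and> sublist l2 (\<alpha>@\<beta>))"
  shows "\<exists>x u y v. x \<noteq> [] \<and> y \<noteq> [] \<and> l1 = x @ u @ y \<and> l2 = y @ v @ x"
proof (cases "length l1 \<le> length \<alpha>")
  case True
  then have "\<alpha> = l1 @ drop (length l1) \<alpha>" using e2
    by (metis append_eq_append_conv_if append_take_drop_id take_all)
  then have "sublist l1 (\<beta>@\<alpha>)" by (metis sublist_appendI sublist_append_rightI)
  moreover have "sublist l2 (\<beta>@\<alpha>)" using e1 by (metis prefix_def prefix_imp_sublist)
  ultimately show ?thesis using n1 by blast
next
  case False
  define y where "y = drop (length \<alpha>) l1"
  have l1: "l1 = \<alpha> @ y" using False e2 unfolding y_def
    by (metis append_eq_append_conv_if append_take_drop_id nat_le_linear take_all)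
  have yne: "y \<noteq> []" using False l1 by auto
  have b: "\<beta> = y @ s" using e2 l1 by simp
  show ?thesis
  proof (cases "length l2 \<le> length (y @ s)")
    case True
    have "l2 = take (length l2) (y @ s @ \<alpha>)" using e1 b by (metis append.assoc append_eq_conv_conj)
    then have "prefix l2 (y @ s)" using True by (metis prefix_def append_take_drop_id take_append append_Nil2 diff_is_0_eq take_0 append.assoc)
    then have "sublist l2 (\<alpha> @ \<beta>)" using b unfolding prefix_def sublist_def by (metis append.assoc)
    moreover have "sublist l1 (\<alpha> @ \<beta>)" using e2 by (metis prefix_def prefix_imp_sublist)
    ultimately show ?thesis using n2 by blast
  next
    case False
    define x where "x = take (length l2 - length (y @ s)) \<alpha>"
    have l2: "l2 = y @ s @ x" using e1 b False unfolding x_def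
      by (metis append.assoc append_eq_conv_conj take_append take_all less_or_eq_imp_le not_le_imp_less)
    have xne: "x \<noteq> []" using False l2 by auto
    have "\<alpha> = x @ drop (length l2 - length (y @ s)) \<alpha>" unfolding x_def by simp
    then have "l1 = x @ drop (length l2 - length (y @ s)) \<alpha> @ y" using l1 by (metis append.assoc)
    then show ?thesis using l2 xne yne by blast
  qed
qed

theorem lemma5p4:
  fixes R :: "'a rule set" and w :: "'a list" and r1 r2 :: "'a rule"
  assumes "complete R"
    and "is_triple R w r1 r2"
    and "\<not> c_defined w r1 r2"
  shows "\<exists>x u y v. x \<noteq> [] \<and> y \<noteq> [] \<and> fst r1 = x @ u @ y \<and> fst r2 = y @ v @ x"
proof -
  obtain s where s: "cyc_conj (fst r1 @ s) w"
    using assms(2) prefix_conj unfolding is_triple_def applicable_def by blast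
  obtain t where t: "cyc_conj (fst r2 @ t) w"
    using assms(2) prefix_conj unfolding is_triple_def applicable_def by blast
  obtain k1 where k1: "fst r1 @ s = rotate k1 w" using s cyc_rot by blast
  obtain k2 where k2: "fst r2 @ t = rotate k2 w" using t cyc_rot by blast
  obtain m where m: "w = rotate m (fst r1 @ s)" using rot_sym[OF k1] by blast
  define z where "z = fst r1 @ s"
  define j where "j = (k2 + m) mod length z"
  have z2: "fst r2 @ t = drop j z @ take j z"
  proof -
    have "fst r2 @ t = rotate (k2 + m) z" using k2 m z_def by (simp add: rotate_rotate)
    then show ?thesis by (simp only: rotate_drop_take j_def)
  qed
  have c1: "cyc_conj (take j z @ drop j z) w" using s z_def by (simp only: append_take_drop_id)
  have c2: "cyc_conj (drop j z @ take j z) w" using t z2 by simp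
  have n1: "\<not> (sublist (fst r1) (drop j z @ take j z) \<and> sublist (fst r2) (drop j z @ take j z))"
    using assms(3) c2 unfolding c_defined_def applicable_def by blast
  have n2: "\<not> (sublist (fst r1) (take j z @ drop j z) \<and> sublist (fst r2) (take j z @ drop j z))"
    using assms(3) c1 unfolding c_defined_def applicable_def by blast
  have "take j z @ drop j z = fst r1 @ s" using z_def by (simp only: append_take_drop_id)
  then show ?thesis using key[OF z2 _ n1 n2] by blast
qed

end
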